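(* Assume the alphabet $\Sigma$ contains at least two characters. The substring complexity $\delta$ satisfies the following lower bounds on its sensitivity: substitutions: $\mathsf{MS}_{\mathrm{sub}}(\delta,n) \geq 2$ and $\mathsf{AS}_{\mathrm{sub}}(\delta,n) \geq 1$; insertions: $\mathsf{MS}_{\mathrm{ins}}(\delta,n) \geq 2$ and $\mathsf{AS}_{\mathrm{ins}}(\delta,n) \geq 1$; deletions: $\liminf_{n\to\infty}\mathsf{MS}_{\mathrm{del}}(\delta,n) \geq 1.5$ and $\liminf_{n\to\infty}\mathsf{AS}_{\mathrm{del}}(\delta,n) \geq 1$.
   Context: Strings are finite sequences over an alphabet $\Sigma$; $\Sigma^n$ is the set of strings of length $n$. $\mathsf{ed}(T,S)$ is the edit distance (minimum number of single-character substitutions, insertions, deletions turning $T$ into $S$). For a measure $C$ assigning a number $C(T)$ to each string, define $\mathsf{MS}_{\mathrm{sub}}(C,n)=\max_{T\in\Sigma^n}\{C(T')/C(T): T'\in\Sigma^n,\ \mathsf{ed}(T,T')=1\}$, $\mathsf{MS}_{\mathrm{ins}}(C,n)$ and $\mathsf{MS}_{\mathrm{del}}(C,n)$ the same with $T'\in\Sigma^{n+1}$, resp. $T'\in\Sigma^{n-1}$; and $\mathsf{AS}_{\mathrm{sub}},\mathsf{AS}_{\mathrm{ins}},\mathsf{AS}_{\mathrm{del}}$ the same with $C(T')-C(T)$ in place of $C(T')/C(T)$. For a string $T$ of length $n$, $\mathsf{Substr}(T,k)$ is the number of distinct substrings of length $k$ of $T$, and the substring complexity is $\delta(T)=\max_{1\le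 k\le n}\mathsf{Substr}(T,k)/k$. *)

theory Defs
  imports Complex_Main "HOL-Library.Extended_Real" "HOL-Library.Liminf_Limsup"
begin

definition strs :: "'a set \<Rightarrow> nat \<Rightarrow> 'a list set" where
  "strs \<Sigma> n = {T. length T = n \<and> set T \<subseteq> \<Sigma>}"

fun ed :: "'a list \<Rightarrow> 'a list \<Rightarrow> nat" where
  "ed [] ys = length ys"
| "ed xs [] = length xs"
| "ed (x # xs) (y # ys) =
     min (min (ed xs (y # ys) + 1) (ed (x # xs) ys + 1))
         (ed xs ys + (if x = y then 0 else 1))"

definition Substr :: "'a list \<Rightarrow> nat \<Rightarrow> nat" where
  "Substr T k = card {take k (drop i T) | i. i + k \<le> length T}"

definition delta :: "'a list \<Rightarrow> real" where
  "delta T = (if T = [] then 0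
              else Max ((\<lambda>k. real (Substr T k) / real k) ` {1..length T}))"

text \<open>Sensitivities, as suprema in the extended reals (maxima when the alphabet is finite).\<close>
definition MS_sub :: "('a list \<Rightarrow> real) \<Rightarrow> 'a set \<Rightarrow> nat \<Rightarrow> ereal" where
  "MS_sub C \<Sigma> n = (SUP P \<in> {(T, T'). T \<in> strs \<Sigma> n \<and> T' \<in> strs \<Sigma> n \<and> ed T T' = 1}.
                      ereal (C (snd P) / C (fst P)))"

definition MS_ins :: "('a list \<Rightarrow> real) \<Rightarrow> 'a set \<Rightarrow> nat \<Rightarrow> ereal" where
  "MS_ins C \<Sigma> n = (SUP P \<in> {(T, T'). T \<in> strs \<Sigma> n \<and> T' \<in> strs \<Sigma> (n + 1) \<and> ed T T' = 1}.
                      ereal (C (snd P) / C (fst P)))"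

definition MS_del :: "('a list \<Rightarrow> real) \<Rightarrow> 'a set \<Rightarrow> nat \<Rightarrow> ereal" where
  "MS_del C \<Sigma> n = (SUP P \<in> {(T, T'). T \<in> strs \<Sigma> n \<and> T' \<in> strs \<Sigma> (n - 1) \<and> ed T T' = 1}.
                      ereal (C (snd P) / C (fst P)))"

definition AS_sub :: "('a list \<Rightarrow> real) \<Rightarrow> 'a set \<Rightarrow> nat \<Rightarrow> ereal" where
  "AS_sub C \<Sigma> n = (SUP P \<in> {(T, T'). T \<in> strs \<Sigma> n \<and> T' \<in> strs \<Sigma> n \<and> ed T T' = 1}.
                      ereal (C (snd P) - C (fst P)))"

definition AS_ins :: "('a list \<Rightarrow> real) \<Rightarrow> 'a set \<Rightarrow> nat \<Rightarrow> ereal" where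
  "AS_ins C \<Sigma> n = (SUP P \<in> {(T, T'). T \<in> strs \<Sigma> n \<and> T' \<in> strs \<Sigma> (n + 1) \<and> ed T T' = 1}.
                      ereal (C (snd P) - C (fst P)))"

definition AS_del :: "('a list \<Rightarrow> real) \<Rightarrow> 'a set \<Rightarrow> nat \<Rightarrow> ereal" where
  "AS_del C \<Sigma> n = (SUP P \<in> {(T, T'). T \<in> strs \<Sigma> n \<and> T' \<in> strs \<Sigma> (n - 1) \<and> ed T T' = 1}.
                      ereal (C (snd P) - C (fst P)))"

end

theory Submission
  imports Defs
begin

lemma ed_refl: "ed xs xs = 0"
  by (induction xs) auto

lemma ed_zero: "ed xs ys = 0 \<Longrightarrow> xs = ys"
  by (induction xs ys rule: ed.induct) (auto split: if_splits simp: min_def)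

lemma ed_prefix: "ed (xs @ ys) (xs @ zs) \<le> ed ys zs"
proof (induction xs)
  case Nil then show ?case by simp
next
  case (Cons x xs)
  have "ed ((x#xs) @ ys) ((x#xs) @ zs) \<le> ed (xs@ys) (xs@zs)" by simp
  with Cons show ?case by simp
qed

lemma ed_cons_del: "ed (c # ys) ys \<le> 1"
  by (cases ys) (auto simp: ed_refl)

lemma ed_cons_sub: "ed (c # ys) (d # ys) \<le> 1"
  by (simp add: ed_refl)

lemma ed_cons_ins: "ed ys (d # ys) \<le> 1"
  by (cases ys) (auto simp: ed_refl)

lemma ed_eq1: "ed xs ys \<le> 1 \<Longrightarrow> xs \<noteq> ys \<Longrightarrow> ed xs ys = 1"
  using ed_zero[of xs ys] by linarith

definition win :: "(nat \<Rightarrow> bool) \<Rightarrow> nat \<Rightarrow> nat \<Rightarrow> bool list" where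
  "win g k i = map (\<lambda>x. g (i + x)) [0..<k]"

lemma Substr_map_inj:
  assumes "inj h" shows "Substr (map h w) k = Substr w k"
proof -
  have "{take k (drop i (map h w)) | i. i + k \<le> length (map h w)} = map h ` {take k (drop i w) | i. i + k \<le> length w}"
    by (auto simp: take_map drop_map)
  moreover have "inj_on (map h) X" for X using assms by (meson inj_mapI inj_on_subset subset_UNIV)
  ultimately show ?thesis unfolding Substr_def by (simp add: card_image)
qed

lemma delta_map_inj: "inj h \<Longrightarrow> delta (map h w) = delta w"
  unfolding delta_def by (simp add: Substr_map_inj)

lemma Substr_fun: "Substr (map g [0..<n]) k = card (win g k ` {i. i + k \<le> n})"
proof -
  have "{take k (drop i (map g [0..<n])) | i. i + k \<le> length (map g [0..<n])} = win g k ` {i. i + k \<le> n}"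
  proof -
    have "take k (drop i (map g [0..<n])) = win g k i" if "i + k \<le> n" for i
      using that by (intro nth_equalityI) (auto simp: win_def)
    then show ?thesis by (auto simp: image_def) (metis)
  qed
  then show ?thesis unfolding Substr_def by simp
qed

lemma delta_le:
  assumes "w \<noteq> []" "\<And>k. 1 \<le> k \<Longrightarrow> k \<le> length w \<Longrightarrow> real (Substr w k) \<le> c * real k"
  shows "delta w \<le> c"
  unfolding delta_def using assms(1)
proof (simp, intro Max.boundedI)
  show "(\<lambda>k. real (Substr w k) / real k) ` {Suc 0..length w} \<noteq> {}" using assms(1) by (cases w) auto
  fix y assume "y \<in> (\<lambda>k. real (Substr w k) / real k) ` {Suc 0..length w}"
  then obtain k where k: "1 \<le> k" "k \<le> length w" "y = real (Substr w k) / real k" by auto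
  then show "y \<le> c" using assms(2)[OF k(1,2)] by (simp add: divide_le_eq)
qed (cases w, auto)

lemma delta_ge:
  assumes "1 \<le> k" "k \<le> length w"
  shows "real (Substr w k) / real k \<le> delta w"
  unfolding delta_def using assms by (auto intro!: Max_ge)

definition gT :: "nat \<Rightarrow> nat \<Rightarrow> nat \<Rightarrow> bool" where
  "gT M L i = (M \<le> i \<and> i < M + L \<and> (i - M) mod 3 \<noteq> 0)"

definition WA :: "nat \<Rightarrow> nat \<Rightarrow> nat \<Rightarrow> bool list" where
  "WA L m d = map (\<lambda>x. d \<le> x \<and> x < d + L \<and> (x - d) mod 3 \<noteq> 0) [0..<m]"
definition WB :: "nat \<Rightarrow> nat \<Rightarrow> nat \<Rightarrow> bool list" where
  "WB L m e = map (\<lambda>x. x < e \<and> (L - e + x) mod 3 \<noteq> 0) [0..<m]"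
definition WC :: "nat \<Rightarrow> nat \<Rightarrow> bool list" where
  "WC m c = map (\<lambda>x. (c + x) mod 3 \<noteq> 0) [0..<m]"

lemma win_cases:
  assumes L: "L mod 3 = 1" and m: "2 \<le> m"
  shows "win (gT M L) m i \<in> WA L m ` {1..m-1} \<union> WB L m ` {2..m-1} \<union> WC m ` {0,1,2}"
proof (cases "i < M")
  case True
  define d where "d = M - i"
  have "win (gT M L) m i = WA L m (min d (m-1))"
  proof (cases "d \<le> m - 1")
    case True
    then show ?thesis unfolding win_def WA_def gT_def d_def
      using \<open>i < M\<close> by (intro map_cong) (auto simp: add.commute)
  next
    case False
    then show ?thesis unfolding win_def WA_def gT_def d_def
      using \<open>i < M\<close> by (intro map_cong) auto
  qed
  moreover have "min d (m-1) \<in> {1..m-1}" using True m d_def by auto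
  ultimately show ?thesis by blast
next
  case False
  show ?thesis
  proof (cases "i + m \<le> M + L")
    case True
    have "win (gT M L) m i = WC m ((i - M) mod 3)"
      unfolding win_def WC_def gT_def
      using False True by (intro map_cong) (auto simp: mod_add_left_eq)
    moreover have "(i - M) mod 3 \<in> {0,1,2}" by auto
    ultimately show ?thesis by (metis UnI2 image_eqI)
  next
    case F2: False
    define e where "e = M + L - i"
    show ?thesis
    proof (cases "e \<le> 1")
      case True
      have aux: "(i + x - M) mod 3 = 0" if "i + x < M + L" for x
      proof -
        have "i + x - M = L - 1" using that True False e_def by linarith
        then show ?thesis using L by presburger
      qed
      have "win (gT M L) m i = WA L m (m-1)"
        unfolding win_def WA_def gT_def
        using False True e_def L m aux by (intro map_cong) auto
      moreover have "m - 1 \<in> {1..m-1}" using m by auto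
      ultimately show ?thesis by blast
    next
      case F3: False
      have "win (gT M L) m i = WB L m e"
        unfolding win_def WB_def gT_def
        using False F2 F3 e_def by (intro map_cong) auto
      moreover have "e \<in> {2..m-1}" using F2 F3 e_def by auto
      ultimately show ?thesis by blast
    qed
  qed
qed

lemma card_T:
  assumes L: "L mod 3 = 1" and m: "1 \<le> m"
  shows "card (win (gT M L) m ` {i. i + m \<le> n}) \<le> 2 * m"
proof (cases "m = 1")
  case True
  have "win (gT M L) m ` {i. i + m \<le> n} \<subseteq> {[False],[True]}"
    unfolding win_def using True by auto
  then have "card (win (gT M L) m ` {i. i + m \<le> n}) \<le> card {[False],[True]}"
    by (intro card_mono) auto
  then show ?thesis using True by simp
next
  case False
  then have m2: "2 \<le> m" using m by simp
  have "card (win (gT M L) m ` {i. i + m \<le> n}) \<le> card (WA L m ` {1..m-1} \<union> WB L m ` {2..m-1} \<union> WC m ` {0,1,2})"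
    using win_cases[OF L m2] by (intro card_mono) auto
  also have "\<dots> \<le> card (WA L m ` {1..m-1}) + card (WB L m ` {2..m-1}) + card (WC m ` {0,1,2})"
    by (meson card_Un_le add_right_mono order_trans)
  also have "\<dots> \<le> card {1..m-1} + card {2..m-1} + card {0::nat,1,2}"
    by (intro add_mono card_image_le) auto
  also have "\<dots> \<le> 2 * m" using m2 by simp
  finally show ?thesis .
qed

definition gD :: "nat \<Rightarrow> nat \<Rightarrow> bool" where
  "gD k i = gT k (6*k+1) (if i < 4*k then i else Suc i)"

lemma gD_char: "gD k (k + q) \<longleftrightarrow> (q < 3*k \<and> q mod 3 \<noteq> 0) \<or> (3*k \<le> q \<and> q < 6*k \<and> (q+1) mod 3 \<noteq> 0)"
  unfolding gD_def gT_def by auto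

lemma gD_low: "i \<le> k \<Longrightarrow> \<not> gD k i"
  unfolding gD_def gT_def by auto

lemma gD_bbbb:
  assumes "gD k m" "gD k (m+1)" "gD k (m+2)" "gD k (m+3)"
  shows "m = 4*k - 2"
proof -
  have "k < m" using assms(1) gD_low[of m k] by linarith
  then obtain q where q: "m = k + q" by (metis less_imp_add_positive)
  have h: "gD k (k + q)" "gD k (k + (q+1))" "gD k (k + (q+2))" "gD k (k + (q+3))"
    using assms q by (simp_all add: add.assoc)
  then have "q = 3*k - 2" unfolding gD_char by presburger
  then show ?thesis using q \<open>k < m\<close> by linarith
qed

lemma gD_true4: assumes "1 \<le> k" "t < 4" shows "gD k (4*k - 2 + t)"
proof -
  have e: "4*k - 2 + t = k + (3*k - 2 + t)" using assms by linarith
  show ?thesis unfolding e gD_char using assms by presburger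
qed

lemma gD_first: "1 \<le> k \<Longrightarrow> gD k (k+1)"
  unfolding gD_def gT_def by auto

lemma gD_last: assumes "1 \<le> k" shows "gD k (7*k-2)"
proof -
  have e: "7*k-2 = k + (6*k - 2)" using assms by linarith
  show ?thesis unfolding e gD_char using assms by presburger
qed

lemma gD_after: assumes "7*k-2 < i" shows "\<not> gD k i"
proof (cases "i \<le> k")
  case True then show ?thesis by (rule gD_low)
next
  case False
  then obtain q where q: "i = k + q" by (metis le_add_diff_inverse nat_le_linear)
  have q6: "6*k - 1 \<le> q" using assms q by linarith
  show ?thesis
  proof (cases "q = 6*k - 1")
    case True
    then have "q + 1 = 3 * (2*k)" using q6 assms q by linarith
    then have "(q+1) mod 3 = 0" by simp
    moreover have "\<not> q < 3*k" using True by linarith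
    ultimately show ?thesis unfolding q gD_char by simp
  next
    case False
    then have "6*k \<le> q" using q6 by linarith
    then show ?thesis unfolding q gD_char by simp
  qed
qed

lemma gD_two: assumes "4*k \<le> i" "i + 1 \<le> 7*k-2" shows "gD k i \<or> gD k (i+1)"
proof -
  obtain q where q: "i = k + q" using assms by (metis le_add_diff_inverse le_trans le_add2 mult_le_mono1 numeral_le_iff one_le_numeral mult_1)
  have r: "3*k \<le> q" "q + 1 < 6*k" "3*k \<le> q + 1" using assms q by linarith+
  have m: "(q+1) mod 3 \<noteq> 0 \<or> (q+1+1) mod 3 \<noteq> 0" by presburger
  have "gD k (k + q) \<or> gD k (k + (q + 1))" unfolding gD_char using r m by auto
  then show ?thesis using q by (simp add: add.assoc)
qed

lemma sepQ:
  assumes k: "4 \<le> k" and j: "j \<in> {3*k+2..4*k-2}" and H: "\<forall>x<k. gD k (i+x) = gD k (j+x)"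
  shows "i = j"
proof -
  define x0 where "x0 = 4*k - 2 - j"
  have x0: "x0 + 3 < k" "j + x0 = 4*k-2" using j k unfolding x0_def by auto
  have t: "gD k (i + x0 + t)" if "t < 4" for t
  proof -
    have "gD k (j + (x0 + t))" using gD_true4[of k t] k that x0 by (simp add: add.assoc[symmetric])
    then show ?thesis using H x0 that by (simp add: add.assoc)
  qed
  have "i + x0 = 4*k - 2"
    using gD_bbbb[of k "i+x0"] t[of 0] t[of 1] t[of 2] t[of 3] by (simp add: add.assoc)
  then show ?thesis using x0 by linarith
qed

lemma sepLR:
  assumes k: "4 \<le> k" and i: "i \<in> {2..k-1} \<union> {6*k-1..7*k-3}" and j: "j \<in> {2..k-1} \<union> {6*k-1..7*k-3}"
    and ij: "i < j" and H: "\<forall>x<k. gD k (i+x) = gD k (j+x)"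
  shows False
proof -
  consider (LL) "i \<in> {2..k-1}" "j \<in> {2..k-1}" | (RR) "i \<in> {6*k-1..7*k-3}" "j \<in> {6*k-1..7*k-3}"
    | (LR) "i \<in> {2..k-1}" "j \<in> {6*k-1..7*k-3}"
    using i j ij k by auto
  then show False
  proof cases
    case LL
    define x where "x = k + 1 - j"
    have "x < k" "j + x = k + 1" "i + x \<le> k" using LL ij unfolding x_def by auto
    then show False using H gD_first[of k] gD_low[of "i+x" k] k by force
  next
    case RR
    define x where "x = 7*k-2 - i"
    have "x < k" "i + x = 7*k-2" "7*k-2 < j + x" using RR ij k unfolding x_def by auto
    then show False using H gD_last[of k] gD_after[of k "j+x"] k by force
  next
    case LR
    have "gD k j \<or> gD k (j+1)" using LR k by (intro gD_two) auto
    moreover have "i \<le> k" "i+1 \<le> k" using LR by auto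
    then have "\<not> gD k i" "\<not> gD k (i+1)" by (auto simp del: One_nat_def intro!: gD_low)
    ultimately show False using H k by (metis add.right_neutral less_trans numeral_less_iff one_less_numeral_iff semiring_norm(76) zero_less_one less_le_trans)
  qed
qed

lemma card_D:
  assumes k: "4 \<le> k" and n: "8*k \<le> n"
  shows "3*k - 6 \<le> card (win (gD k) k ` {i. i + k \<le> n})"
proof -
  define S where "S = {2..k-1} \<union> {3*k+2..4*k-2} \<union> {6*k-1..7*k-3}"
  have cS: "card S = 3*k - 6"
  proof -
    have "card S = card ({2..k-1} \<union> {3*k+2..4*k-2}) + card {6*k-1..7*k-3}"
      unfolding S_def using k by (intro card_Un_disjoint) auto
    also have "card ({2..k-1} \<union> {3*k+2..4*k-2}) = card {2..k-1} + card {3*k+2..4*k-2}"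
      using k by (intro card_Un_disjoint) auto
    finally show ?thesis using k by simp
  qed
  have inj: "inj_on (win (gD k) k) S"
  proof (rule inj_onI)
    fix i j assume i: "i \<in> S" and j: "j \<in> S" and e: "win (gD k) k i = win (gD k) k j"
    have H: "\<forall>x<k. gD k (i+x) = gD k (j+x)"
    proof (intro allI impI)
      fix x assume "x < k"
      then show "gD k (i+x) = gD k (j+x)" using arg_cong[OF e, of "\<lambda>l. l ! x"] by (simp add: win_def)
    qed
    show "i = j"
    proof (cases "j \<in> {3*k+2..4*k-2}")
      case True show ?thesis by (rule sepQ[OF k True H])
    next
      case F1: False
      show ?thesis
      proof (cases "i \<in> {3*k+2..4*k-2}")
        case True then show ?thesis using sepQ[OF k True] H by metis
      next
        case False
        have i': "i \<in> {2..k-1} \<union> {6*k-1..7*k-3}" and j': "j \<in> {2..k-1} \<union> {6*k-1..7*k-3}"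
          using i j False F1 unfolding S_def by auto
        show ?thesis
        proof (rule linorder_cases[of i j])
          assume "i < j" then show ?thesis using sepLR[OF k i' j' _ H] by blast
        next
          assume "j < i" then show ?thesis using sepLR[OF k j' i'] H by metis
        qed
      qed
    qed
  qed
  have "S \<subseteq> {i. i + k \<le> n}" unfolding S_def using k n by auto
  then have "win (gD k) k ` S \<subseteq> win (gD k) k ` {i. i + k \<le> n}" by auto
  moreover have "finite {i::nat. i + k \<le> n}" by (rule finite_subset[of _ "{..n}"]) auto
  ultimately have "card (win (gD k) k ` S) \<le> card (win (gD k) k ` {i. i + k \<le> n})"
    by (intro card_mono) auto
  then show ?thesis using card_image[OF inj] cS by simp
qed

lemma Substr_pos: assumes "1 \<le> k" "k \<le> length w" shows "1 \<le> Substr w k"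
proof -
  have eq: "{take k (drop i w) | i. i + k \<le> length w} = (\<lambda>i. take k (drop i w)) ` {i. i + k \<le> length w}" by auto
  have "finite {i::nat. i + k \<le> length w}" by (rule finite_subset[of _ "{..length w}"]) auto
  moreover have "0 \<in> {i::nat. i + k \<le> length w}" using assms by simp
  ultimately show ?thesis unfolding Substr_def eq
    by (metis (no_types, lifting) One_nat_def Suc_leI card_gt_0_iff empty_iff finite_imageI imageI)
qed

lemma delta_pos: "w \<noteq> [] \<Longrightarrow> 0 < delta w"
  using delta_ge[of 1 w] Substr_pos[of 1 w] by (cases w) auto

lemma split_T: assumes "4*k < n"
  shows "map (gT k (6*k+1)) [0..<n] = map (gT k (6*k+1)) [0..<4*k] @ gT k (6*k+1) (4*k) # map (gT k (6*k+1)) [Suc (4*k)..<n]"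
proof -
  have "[0..<n] = [0..<4*k] @ [4*k..<n]" using assms upt_add_eq_append[of 0 "4*k" "n - 4*k"] by simp
  also have "[4*k..<n] = 4*k # [Suc (4*k)..<n]" using assms by (rule upt_conv_Cons)
  finally show ?thesis by simp
qed

lemma split_D: assumes "4*k < n"
  shows "map (gD k) [0..<n-1] = map (gT k (6*k+1)) [0..<4*k] @ map (gT k (6*k+1)) [Suc (4*k)..<n]"
proof -
  have "[0..<n-1] = [0..<4*k] @ [4*k..<n-1]" using assms upt_add_eq_append[of 0 "4*k" "n - 1 - 4*k"] by simp
  moreover have "map (gD k) [0..<4*k] = map (gT k (6*k+1)) [0..<4*k]" by (intro map_cong) (auto simp: gD_def)
  moreover have "map (gD k) [4*k..<n-1] = map (gT k (6*k+1)) [Suc (4*k)..<n]"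
  proof -
    have "map (gD k) [4*k..<n-1] = map (gT k (6*k+1) \<circ> Suc) [4*k..<n-1]"
      by (intro map_cong) (auto simp: gD_def)
    also have "\<dots> = map (gT k (6*k+1)) (map Suc [4*k..<n-1])" by (simp only: map_map)
    also have "map Suc [4*k..<n-1] = [Suc (4*k)..<n]" using assms by (simp add: map_Suc_upt)
    finally show ?thesis .
  qed
  ultimately show ?thesis by (simp only: map_append)
qed

lemma liminf_ge:
  fixes f :: "nat \<Rightarrow> ereal"
  assumes "\<And>r. r < c \<Longrightarrow> \<exists>N. \<forall>n\<ge>N. ereal r \<le> f n"
  shows "ereal c \<le> liminf f"
  unfolding le_Liminf_iff
proof (intro allI impI)
  fix y assume "y < ereal c"
  then obtain z where z: "y < ereal z" "ereal z < ereal c" using ereal_dense2 by blast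
  then obtain N where N: "\<forall>n\<ge>N. ereal z \<le> f n" using assms by auto
  show "eventually (\<lambda>x. y < f x) sequentially"
    unfolding eventually_sequentially using N z(1) by (meson less_le_trans)
qed

lemma del_bound:
  fixes \<Sigma> :: "'a set"
  assumes ab: "a \<in> \<Sigma>" "b \<in> \<Sigma>" "a \<noteq> b" and k: "4 \<le> k" and n: "8*k+1 \<le> n"
  shows "ereal (real (3*k-6) / real k / 2) \<le> MS_del delta \<Sigma> n \<and> ereal (real (3*k-6) / real k - 2) \<le> AS_del delta \<Sigma> n"
proof -
  define h where "h = (\<lambda>\<beta>. if \<beta> then b else a)"
  have inj: "inj h" using ab(3) unfolding inj_def h_def by auto
  define w where "w = map (gT k (6*k+1)) [0..<n]"
  define w' where "w' = map (gD k) [0..<n-1]"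
  define T where "T = map h w"
  define T' where "T' = map h w'"
  have hs: "set (map h v) \<subseteq> \<Sigma>" for v using ab unfolding h_def by auto
  have sT: "T \<in> strs \<Sigma> n" unfolding strs_def T_def using hs[of w] by (simp add: w_def)
  have sT': "T' \<in> strs \<Sigma> (n-1)" unfolding strs_def T'_def using hs[of w'] by (simp add: w'_def)
  have kn: "4*k < n" using n k by linarith
  have edT: "ed T T' = 1"
  proof -
    define X where "X = map h (map (gT k (6*k+1)) [0..<4*k])"
    define Y where "Y = map h (map (gT k (6*k+1)) [Suc (4*k)..<n])"
    define c where "c = h (gT k (6*k+1) (4*k))"
    have T1: "T = X @ c # Y" unfolding T_def w_def X_def Y_def c_def using split_T[OF kn] by simp
    have T2: "T' = X @ Y" unfolding T'_def w'_def X_def Y_def using split_D[OF kn] by simp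
    have "ed T T' \<le> 1" unfolding T1 T2 using ed_prefix[of X "c # Y" Y] ed_cons_del[of c Y] by linarith
    moreover have "T \<noteq> T'" unfolding T1 T2 by (metis add_Suc_right append_Nil2 length_Cons length_append n_not_Suc_n)
    ultimately show ?thesis by (rule ed_eq1)
  qed
  have wne: "w \<noteq> []" unfolding w_def using kn by simp
  have dT: "delta T \<le> 2"
  proof -
    have "delta w \<le> 2"
    proof (rule delta_le[OF wne])
      fix m assume m: "1 \<le> m" "m \<le> length w"
      have L: "(6*k+1) mod 3 = 1" by presburger
      have "Substr w m \<le> 2 * m" unfolding w_def Substr_fun using card_T[OF L m(1)] .
      then show "real (Substr w m) \<le> 2 * real m" by linarith
    qed
    then show ?thesis unfolding T_def using delta_map_inj[OF inj] by simp
  qed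
  have dT0: "0 < delta T" unfolding T_def using delta_pos[of "map h w"] wne by simp
  have dT': "real (3*k-6) / real k \<le> delta T'"
  proof -
    have "3*k - 6 \<le> Substr w' k" unfolding w'_def Substr_fun using card_D[OF k, of "n-1"] n by simp
    then have "real (3*k-6) / real k \<le> real (Substr w' k) / real k"
      by (intro divide_right_mono) auto
    also have "\<dots> \<le> delta w'" using k n by (intro delta_ge) (auto simp: w'_def)
    finally show ?thesis unfolding T'_def using delta_map_inj[OF inj] by simp
  qed
  have mem: "(T, T') \<in> {(T, T'). T \<in> strs \<Sigma> n \<and> T' \<in> strs \<Sigma> (n - 1) \<and> ed T T' = 1}"
    using sT sT' edT by simp
  have nn: "0 \<le> real (3*k-6) / real k" by simp
  have r1: "real (3*k-6) / real k / 2 \<le> delta T' / delta T"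
  proof -
    have "real (3*k-6) / real k / 2 \<le> delta T' / 2" using dT' by (simp add: divide_right_mono)
    also have "\<dots> \<le> delta T' / delta T" using dT dT0 order_trans[OF nn dT'] by (intro divide_left_mono) auto
    finally show ?thesis .
  qed
  have r2: "real (3*k-6) / real k - 2 \<le> delta T' - delta T" using dT dT' by linarith
  show ?thesis
    unfolding MS_del_def AS_del_def
    using SUP_upper2[OF mem, of "ereal (real (3*k-6) / real k / 2)" "\<lambda>P. ereal (delta (snd P) / delta (fst P))"]
      SUP_upper2[OF mem, of "ereal (real (3*k-6) / real k - 2)" "\<lambda>P. ereal (delta (snd P) - delta (fst P))"]
      r1 r2 by simp
qed

lemma Substr_rep: "Substr (replicate n False) m \<le> 1"
proof -
  have "{take m (drop i (replicate n False)) | i. i + m \<le> length (replicate n False)} \<subseteq> {replicate m False}"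
    by auto
  then have "card {take m (drop i (replicate n False)) | i. i + m \<le> length (replicate n False)} \<le> card {replicate m False}"
    by (intro card_mono) auto
  then show ?thesis unfolding Substr_def by simp
qed

lemma delta_rep: "1 \<le> n \<Longrightarrow> delta (replicate n False) \<le> 1"
proof (rule delta_le)
  fix k :: nat assume "1 \<le> k"
  then show "real (Substr (replicate n False) k) \<le> 1 * real k" using Substr_rep[of n k] by simp
qed (cases n, auto)

lemma delta_TF: assumes "1 \<le> m" shows "2 \<le> delta (True # replicate m False)"
proof -
  let ?w = "True # replicate m False"
  have fin: "finite {take 1 (drop i ?w) | i. i + 1 \<le> length ?w}"
  proof -
    have "{take 1 (drop i ?w) | i. i + 1 \<le> length ?w} = (\<lambda>i. take 1 (drop i ?w)) ` {i. i + 1 \<le> length ?w}" by auto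
    moreover have "finite {i::nat. i + 1 \<le> length ?w}" by (rule finite_subset[of _ "{..length ?w}"]) auto
    ultimately show ?thesis by simp
  qed
  have s: "{[True],[False]} \<subseteq> {take 1 (drop i ?w) | i. i + 1 \<le> length ?w}"
  proof -
    have "[True] = take 1 (drop 0 ?w)" by simp
    moreover have "[False] = take 1 (drop 1 ?w)" using assms by (cases m) auto
    ultimately show ?thesis using assms by fastforce
  qed
  have "2 \<le> Substr ?w 1" unfolding Substr_def using card_mono[OF fin s] by simp
  then have "2 \<le> real (Substr ?w 1) / real 1" by simp
  also have "\<dots> \<le> delta ?w" by (rule delta_ge) auto
  finally show ?thesis .
qed

lemma sub_ins:
  fixes \<Sigma> :: "'a set"
  assumes ab: "a \<in> \<Sigma>" "b \<in> \<Sigma>" "a \<noteq> b"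
  shows "(\<forall>n\<ge>2. MS_sub delta \<Sigma> n \<ge> 2 \<and> AS_sub delta \<Sigma> n \<ge> 1)
       \<and> (\<forall>n\<ge>1. MS_ins delta \<Sigma> n \<ge> 2 \<and> AS_ins delta \<Sigma> n \<ge> 1)"
proof -
  define h where "h = (\<lambda>\<beta>. if \<beta> then b else a)"
  have inj: "inj h" using ab(3) unfolding inj_def h_def by auto
  have hs: "set (map h v) \<subseteq> \<Sigma>" for v using ab unfolding h_def by auto
  have key: "2 \<le> delta T' / delta T \<and> 1 \<le> delta T' - delta T"
    if "T = map h (replicate n False)" "T' = map h (True # replicate m False)" "1 \<le> n" "1 \<le> m" for T T' n m
  proof -
    have d1: "delta T \<le> 1" "0 < delta T"
      using that(1,3) delta_rep[of n] delta_pos[of T] delta_map_inj[OF inj, of "replicate n False"] by (auto simp del: map_replicate)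
    have d2: "2 \<le> delta T'" using that(2,4) delta_TF[of m] delta_map_inj[OF inj, of "True # replicate m False"] by (auto simp del: map_replicate list.map)
    have "delta T' \<le> delta T' / delta T" using d1 d2 by (simp add: le_divide_eq)
    then show ?thesis using d1 d2 by linarith
  qed
  have P1: "MS_sub delta \<Sigma> n \<ge> 2 \<and> AS_sub delta \<Sigma> n \<ge> 1" if n: "n \<ge> 2" for n
  proof -
    define T where "T = map h (replicate n False)"
    define T' where "T' = map h (True # replicate (n-1) False)"
    have rep: "replicate n False = False # replicate (n-1) False" using n by (cases n) auto
    have e1: "ed T T' \<le> 1" unfolding T_def T'_def rep list.map by (rule ed_cons_sub)
    have e2: "T \<noteq> T'" unfolding T_def T'_def rep using ab(3) by (simp add: h_def)
    have e: "ed T T' = 1" using e1 e2 by (rule ed_eq1)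
    have mem: "(T, T') \<in> {(T, T'). T \<in> strs \<Sigma> n \<and> T' \<in> strs \<Sigma> n \<and> ed T T' = 1}"
      using e hs[of "replicate n False"] hs[of "True # replicate (n-1) False"] n
      unfolding strs_def T_def T'_def by auto
    have k: "2 \<le> delta T' / delta T \<and> 1 \<le> delta T' - delta T" using key[OF T_def T'_def] n by auto
    show ?thesis unfolding MS_sub_def AS_sub_def
      using SUP_upper2[OF mem, of "2" "\<lambda>P. ereal (delta (snd P) / delta (fst P))"]
        SUP_upper2[OF mem, of "1" "\<lambda>P. ereal (delta (snd P) - delta (fst P))"] k by simp
  qed
  have P2: "MS_ins delta \<Sigma> n \<ge> 2 \<and> AS_ins delta \<Sigma> n \<ge> 1" if n: "n \<ge> 1" for n
  proof -
    define T where "T = map h (replicate n False)"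
    define T' where "T' = map h (True # replicate n False)"
    have e1: "ed T T' \<le> 1" unfolding T_def T'_def list.map by (rule ed_cons_ins)
    have e2: "T \<noteq> T'" unfolding T_def T'_def by (metis length_Cons length_map n_not_Suc_n)
    have e: "ed T T' = 1" using e1 e2 by (rule ed_eq1)
    have mem: "(T, T') \<in> {(T, T'). T \<in> strs \<Sigma> n \<and> T' \<in> strs \<Sigma> (n+1) \<and> ed T T' = 1}"
      using e hs[of "replicate n False"] hs[of "True # replicate n False"] n
      unfolding strs_def T_def T'_def by auto
    have k: "2 \<le> delta T' / delta T \<and> 1 \<le> delta T' - delta T" using key[OF T_def T'_def] n by auto
    show ?thesis unfolding MS_ins_def AS_ins_def
      using SUP_upper2[OF mem, of "2" "\<lambda>P. ereal (delta (snd P) / delta (fst P))"]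
        SUP_upper2[OF mem, of "1" "\<lambda>P. ereal (delta (snd P) - delta (fst P))"] k by simp
  qed
  show ?thesis using P1 P2 by blast
qed

lemma choose_k:
  fixes r :: real
  assumes "r < c" "0 < d"
  shows "\<exists>k::nat. 4 \<le> k \<and> r < c - d / real k"
proof -
  obtain k :: nat where k: "max 4 (d / (c - r)) < real k" using reals_Archimedean2 by blast
  have kp: "0 < real k" "4 \<le> k" using k by auto
  have "d / (c - r) < real k" using k by auto
  then have "d < real k * (c - r)" using assms by (simp add: divide_less_eq mult.commute)
  then have "d / real k < c - r" using kp by (simp add: divide_less_eq mult.commute)
  then show ?thesis using kp by (intro exI[of _ k]) auto
qed

theorem mainTheorem1:
  fixes \<Sigma> :: "'a set"
  assumes "\<exists>a\<in>\<Sigma>. \<exists>b\<in>\<Sigma>. a \<noteq> b"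
  shows "(\<forall>n\<ge>2. MS_sub delta \<Sigma> n \<ge> 2 \<and> AS_sub delta \<Sigma> n \<ge> 1)
       \<and> (\<forall>n\<ge>1. MS_ins delta \<Sigma> n \<ge> 2 \<and> AS_ins delta \<Sigma> n \<ge> 1)
       \<and> liminf (\<lambda>n. MS_del delta \<Sigma> n) \<ge> ereal (3/2)
       \<and> liminf (\<lambda>n. AS_del delta \<Sigma> n) \<ge> 1"
proof -
  obtain a b where ab: "a \<in> \<Sigma>" "b \<in> \<Sigma>" "a \<noteq> b" using assms by blast
  have eqk: "real (3*k-6) = 3 * real k - 6" if "4 \<le> k" for k :: nat using that by (simp add: of_nat_diff)
  have L1: "ereal (3/2) \<le> liminf (\<lambda>n. MS_del delta \<Sigma> n)"
  proof (rule liminf_ge)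
    fix r :: real assume "r < 3/2"
    then obtain k :: nat where k: "4 \<le> k" "r < 3/2 - 3 / real k" using choose_k[of r "3/2" 3] by auto
    have "real (3*k-6) / real k / 2 = 3/2 - 3 / real k" using k(1) eqk[OF k(1)] by (simp add: field_simps)
    then have "ereal r \<le> MS_del delta \<Sigma> n" if "8*k+1 \<le> n" for n
      using del_bound[OF ab k(1) that] k(2) by (metis ereal_less_eq(3) less_imp_le order_trans)
    then show "\<exists>N. \<forall>n\<ge>N. ereal r \<le> MS_del delta \<Sigma> n" by blast
  qed
  have L2: "ereal 1 \<le> liminf (\<lambda>n. AS_del delta \<Sigma> n)"
  proof (rule liminf_ge)
    fix r :: real assume "r < 1"
    then obtain k :: nat where k: "4 \<le> k" "r < 1 - 6 / real k" using choose_k[of r 1 6] by auto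
    have "real (3*k-6) / real k - 2 = 1 - 6 / real k" using k(1) eqk[OF k(1)] by (simp add: field_simps)
    then have "ereal r \<le> AS_del delta \<Sigma> n" if "8*k+1 \<le> n" for n
      using del_bound[OF ab k(1) that] k(2) by (metis ereal_less_eq(3) less_imp_le order_trans)
    then show "\<exists>N. \<forall>n\<ge>N. ereal r \<le> AS_del delta \<Sigma> n" by blast
  qed
  show ?thesis using sub_ins[OF ab] L1 L2 by (simp add: one_ereal_def)
qed

end
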